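(* In the setting described in the context (assuming (F1) and (F2)), for every $t\in\mathbb N\cup\{0\}$, $$\|z(t)-1_n\otimes\bar w(t)\|_{\pi\otimes1_d}\le\delta\|w(t)-n\pi\otimes\bar w(t)\|_{\pi\otimes1_d}+\delta\|1_n-n\pi\|_\pi\sigma_W^t\big(\|\bar w(t)-w_*\|+\|w_*\|\big).$$
   Context: $G=(V,E)$ directed on $\{1,\dots,n\}$, self-loop at each vertex, strongly connected; $d_j=|\{i:(j,i)\in E\}|$, $W_{ij}=1/d_j$ if $(j,i)\in E$, else $0$. $\pi$: $W\pi=\pi$, $\pi_i>0$, $\sum\pi_i=1$; $W^\infty=\pi1_n^\top$. $\|x\|_\pi=(\sum_ix_i^2/\pi_i)^{1/2}$ on $\mathbb R^n$, $|||\cdot|||_\pi$ the induced operator norm, $\sigma_W=|||W-W^\infty|||_\pi$ (known $<1$). On $\mathbb R^{nd}$, $\|x\|_{\pi\otimes1_d}=(\sum_i\|x_i\|^2/\pi_i)^{1/2}$. $v\otimes u=\mathrm{col}(v_1u,\dots,v_nu)$. $f_i:\mathbb R^d\to\mathbb R$, $f=\frac1n\sum f_i$; (F1) each $\nabla f_i$ is $L_i$-Lipschitz, $L=\max L_i$; (F2) $f$ is $\beta$-strongly convex; $w_*$ is the minimizer of $f$. $\nabla F(x)=\mathrm{col}(\nabla f_i(x_i))$. Algorithm with stepsize $\alpha>0$: given $w(0)\in\mathbb R^{nd}$, $y(0)=1_n$; for $t\ge0$: $z_i(t)=w_i(t)/y_i(t)$, $x_i(t)=w_i(t)-\alpha\nabla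 f_i(z_i(t))$, $w_i(t+1)=\sum_jW_{ij}x_j(t)$, $y_i(t+1)=\sum_jW_{ij}y_j(t)$. $z(t)=\mathrm{col}(z_i(t))$, $\bar w(t)=\frac1n\sum_iw_i(t)$, $\delta=\sup_{t\ge0}\max_i1/y_i(t)$. *)

theory Defs
  imports "HOL-Analysis.Analysis"
begin

text \<open>Vertices are the elements of a finite type 'n (playing the role of 1..n, n = CARD('n)).
  Vectors in R^n are functions 'n => real, n x n matrices are functions 'n => 'n => real.\<close>

definition out_deg :: "('n \<times> 'n) set \<Rightarrow> 'n \<Rightarrow> nat" where
  "out_deg E j = card {i. (j, i) \<in> E}"

definition Wmat :: "('n \<times> 'n) set \<Rightarrow> 'n \<Rightarrow> 'n \<Rightarrow> real" where
  "Wmat E i j = (if (j, i) \<in> E then 1 / real (out_deg E j) else 0)"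

definition mat_vec :: "('n::finite \<Rightarrow> 'n \<Rightarrow> real) \<Rightarrow> ('n \<Rightarrow> real) \<Rightarrow> 'n \<Rightarrow> real" where
  "mat_vec A x = (\<lambda>i. \<Sum>j\<in>UNIV. A i j * x j)"

definition Winf :: "('n \<Rightarrow> real) \<Rightarrow> 'n \<Rightarrow> 'n \<Rightarrow> real" where
  "Winf p i j = p i"

definition pi_norm :: "('n::finite \<Rightarrow> real) \<Rightarrow> ('n \<Rightarrow> real) \<Rightarrow> real" where
  "pi_norm p x = sqrt (\<Sum>i\<in>UNIV. (x i)\<^sup>2 / p i)"

definition pi_opnorm :: "('n::finite \<Rightarrow> real) \<Rightarrow> ('n \<Rightarrow> 'n \<Rightarrow> real) \<Rightarrow> real" where
  "pi_opnorm p A = Sup {pi_norm p (mat_vec A x) | x. pi_norm p x \<le> 1}"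

definition sigmaW :: "('n::finite \<times> 'n) set \<Rightarrow> ('n \<Rightarrow> real) \<Rightarrow> real" where
  "sigmaW E p = pi_opnorm p (\<lambda>i j. Wmat E i j - Winf p i j)"

definition pi_block_norm :: "('n::finite \<Rightarrow> real) \<Rightarrow> ('n \<Rightarrow> real^'d) \<Rightarrow> real" where
  "pi_block_norm p x = sqrt (\<Sum>i\<in>UNIV. (norm (x i))\<^sup>2 / p i)"

definition kron :: "('n \<Rightarrow> real) \<Rightarrow> real^'d \<Rightarrow> 'n \<Rightarrow> real^'d" where
  "kron v u = (\<lambda>i. v i *\<^sub>R u)"

definition strongly_convex :: "real \<Rightarrow> (real^'d \<Rightarrow> real) \<Rightarrow> bool" where
  "strongly_convex \<beta> g \<longleftrightarrow> (\<forall>x y t. 0 \<le> t \<and> t \<le> 1 \<longrightarrow>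
      g (t *\<^sub>R x + (1 - t) *\<^sub>R y) \<le> t * g x + (1 - t) * g y - \<beta> / 2 * t * (1 - t) * (norm (x - y))\<^sup>2)"

primrec yseq :: "('n::finite \<Rightarrow> 'n \<Rightarrow> real) \<Rightarrow> nat \<Rightarrow> 'n \<Rightarrow> real" where
  "yseq W 0 = (\<lambda>_. 1)"
| "yseq W (Suc t) = (\<lambda>i. \<Sum>j\<in>UNIV. W i j * yseq W t j)"

primrec wseq :: "('n::finite \<Rightarrow> 'n \<Rightarrow> real) \<Rightarrow> ('n \<Rightarrow> real^'d \<Rightarrow> real^'d) \<Rightarrow> real
                 \<Rightarrow> ('n \<Rightarrow> real^'d) \<Rightarrow> nat \<Rightarrow> 'n \<Rightarrow> real^'d" where
  "wseq W gF \<alpha> w0 0 = w0"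
| "wseq W gF \<alpha> w0 (Suc t) = (\<lambda>i. \<Sum>j\<in>UNIV. W i j *\<^sub>R
      (wseq W gF \<alpha> w0 t j - \<alpha> *\<^sub>R gF j ((1 / yseq W t j) *\<^sub>R wseq W gF \<alpha> w0 t j)))"

definition zseq :: "('n::finite \<Rightarrow> 'n \<Rightarrow> real) \<Rightarrow> ('n \<Rightarrow> real^'d \<Rightarrow> real^'d) \<Rightarrow> real
                 \<Rightarrow> ('n \<Rightarrow> real^'d) \<Rightarrow> nat \<Rightarrow> 'n \<Rightarrow> real^'d" where
  "zseq W gF \<alpha> w0 t = (\<lambda>i. (1 / yseq W t i) *\<^sub>R wseq W gF \<alpha> w0 t i)"

definition wbar :: "('n::finite \<Rightarrow> 'n \<Rightarrow> real) \<Rightarrow> ('n \<Rightarrow> real^'d \<Rightarrow> real^'d) \<Rightarrow> real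
                 \<Rightarrow> ('n \<Rightarrow> real^'d) \<Rightarrow> nat \<Rightarrow> real^'d" where
  "wbar W gF \<alpha> w0 t = (1 / real CARD('n)) *\<^sub>R (\<Sum>i\<in>UNIV. wseq W gF \<alpha> w0 t i)"

definition delta :: "('n::finite \<Rightarrow> 'n \<Rightarrow> real) \<Rightarrow> real" where
  "delta W = (SUP t. Max ((\<lambda>i. 1 / yseq W t i) ` UNIV))"

end

theory Submission
  imports Defs
begin


lemma pi_norm_L2:
  assumes "\<forall>i. p i > 0"
  shows "pi_norm p x = L2_set (\<lambda>i. \<bar>x i\<bar> / sqrt (p i)) UNIV"
  unfolding pi_norm_def L2_set_def
  using assms by (intro arg_cong[where f=sqrt] sum.cong) (auto simp: power_divide less_imp_le)

lemma pi_block_norm_L2: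
  assumes "\<forall>i. p i > 0"
  shows "pi_block_norm p x = L2_set (\<lambda>i. norm (x i) / sqrt (p i)) UNIV"
  unfolding pi_block_norm_def L2_set_def
  using assms by (intro arg_cong[where f=sqrt] sum.cong) (auto simp: power_divide less_imp_le)

lemma pi_norm_nonneg: "\<forall>i. p i > 0 \<Longrightarrow> pi_norm p x \<ge> 0"
  unfolding pi_norm_def by (simp add: sum_nonneg less_imp_le)

lemma pi_norm_scale:
  "pi_norm p (\<lambda>i. c * x i) = \<bar>c\<bar> * pi_norm p x"
proof -
  have "(\<Sum>i\<in>UNIV. (c * x i)\<^sup>2 / p i) = c\<^sup>2 * (\<Sum>i\<in>UNIV. (x i)\<^sup>2 / p i)"
    by (simp add: sum_distrib_left power_mult_distrib)
  thus ?thesis unfolding pi_norm_def by (simp add: real_sqrt_mult)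
qed

lemma pi_norm_zero:
  assumes "\<forall>i. p i > 0" "pi_norm p x = 0"
  shows "x = (\<lambda>i. 0)"
proof -
  have "(\<Sum>i\<in>UNIV. (x i)\<^sup>2 / p i) = 0" using assms(2) unfolding pi_norm_def by simp
  moreover have "\<forall>i\<in>UNIV. (x i)\<^sup>2 / p i \<ge> 0" using assms(1) by (simp add: less_imp_le)
  ultimately have "\<forall>i. (x i)\<^sup>2 / p i = 0" by (simp add: sum_nonneg_eq_0_iff)
  thus ?thesis using assms(1) by (metis (full_types) divide_eq_0_iff less_irrefl power_eq_0_iff)
qed

lemma mat_vec_scale: "mat_vec A (\<lambda>i. c * x i) = (\<lambda>i. c * mat_vec A x i)"
  unfolding mat_vec_def by (simp add: sum_distrib_left mult.left_commute)

lemma opnorm_bdd: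
  assumes p: "\<forall>i. p i > 0"
  shows "bdd_above {pi_norm p (mat_vec A x) | x. pi_norm p x \<le> 1}"
proof -
  define B where "B = (\<lambda>i. \<Sum>j\<in>UNIV. \<bar>A i j\<bar> * sqrt (p j))"
  have "pi_norm p (mat_vec A x) \<le> pi_norm p B" if "pi_norm p x \<le> 1" for x
  proof -
    have s: "(\<Sum>i\<in>UNIV. (x i)\<^sup>2 / p i) \<le> 1" using that unfolding pi_norm_def by simp
    have xj: "\<bar>x j\<bar> \<le> sqrt (p j)" for j
    proof -
      have "(x j)\<^sup>2 / p j \<le> (\<Sum>i\<in>UNIV. (x i)\<^sup>2 / p i)"
        by (rule member_le_sum) (use p in \<open>auto simp: less_imp_le\<close>)
      hence "(x j)\<^sup>2 / p j \<le> 1" using s by linarith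
      hence "(x j)\<^sup>2 \<le> p j" using p by (simp add: divide_le_eq)
      thus ?thesis using real_le_rsqrt real_sqrt_abs by (metis real_sqrt_le_mono)
    qed
    have ai: "\<bar>mat_vec A x i\<bar> \<le> B i" for i
    proof -
      have "\<bar>mat_vec A x i\<bar> \<le> (\<Sum>j\<in>UNIV. \<bar>A i j * x j\<bar>)"
        unfolding mat_vec_def by (rule sum_abs)
      also have "\<dots> \<le> B i" unfolding B_def
        by (rule sum_mono) (simp add: abs_mult mult_left_mono xj)
      finally show ?thesis .
    qed
    have "(\<Sum>i\<in>UNIV. (mat_vec A x i)\<^sup>2 / p i) \<le> (\<Sum>i\<in>UNIV. (B i)\<^sup>2 / p i)"
    proof (rule sum_mono)
      fix i
      have "(mat_vec A x i)\<^sup>2 \<le> (B i)\<^sup>2" using ai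
        by (metis abs_ge_zero abs_le_square_iff abs_of_nonneg order_trans power2_abs)
      thus "(mat_vec A x i)\<^sup>2 / p i \<le> (B i)\<^sup>2 / p i" using p by (simp add: divide_right_mono less_imp_le)
    qed
    thus ?thesis unfolding pi_norm_def by simp
  qed
  thus ?thesis unfolding bdd_above_def by blast
qed

lemma opnorm_bound:
  assumes p: "\<forall>i. p i > 0"
  shows "pi_norm p (mat_vec A v) \<le> pi_opnorm p A * pi_norm p v"
    and "pi_opnorm p A \<ge> 0"
proof -
  let ?S = "{pi_norm p (mat_vec A x) | x. pi_norm p x \<le> 1}"
  have bdd: "bdd_above ?S" by (rule opnorm_bdd[OF p])
  have z: "pi_norm p (\<lambda>i. 0) = 0" unfolding pi_norm_def by simp
  have "pi_norm p (mat_vec A (\<lambda>i. 0)) \<in> ?S" using z by force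
  moreover have "mat_vec A (\<lambda>i. 0) = (\<lambda>i. 0)" unfolding mat_vec_def by simp
  ultimately have "0 \<in> ?S" using z by simp
  thus "pi_opnorm p A \<ge> 0" unfolding pi_opnorm_def using bdd by (meson cSup_upper)
  show "pi_norm p (mat_vec A v) \<le> pi_opnorm p A * pi_norm p v"
  proof (cases "pi_norm p v = 0")
    case True
    hence "v = (\<lambda>i. 0)" using pi_norm_zero p by blast
    thus ?thesis using z \<open>mat_vec A (\<lambda>i. 0) = (\<lambda>i. 0)\<close> by simp
  next
    case False
    define c where "c = 1 / pi_norm p v"
    have c: "c > 0" using False pi_norm_nonneg[OF p, of v] unfolding c_def by simp
    have "pi_norm p (\<lambda>i. c * v i) = 1" using pi_norm_scale[of p c v] c False unfolding c_def by simp
    hence "pi_norm p (mat_vec A (\<lambda>i. c * v i)) \<in> ?S" by force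
    hence "pi_norm p (mat_vec A (\<lambda>i. c * v i)) \<le> pi_opnorm p A"
      unfolding pi_opnorm_def using bdd by (meson cSup_upper)
    hence "c * pi_norm p (mat_vec A v) \<le> pi_opnorm p A"
      using c by (simp add: mat_vec_scale pi_norm_scale)
    thus ?thesis using c False pi_norm_nonneg[OF p, of v] unfolding c_def
      by (simp add: divide_le_eq mult.commute)
  qed
qed

lemma y_lower:
  assumes nn: "\<forall>i j. W i j \<ge> 0" and st: "mat_vec W p = p" and p1: "\<forall>i. p i \<le> 1"
  shows "yseq W t i \<ge> p i"
proof (induction t arbitrary: i)
  case 0 thus ?case using p1 by simp
next
  case (Suc t)
  have "p i = (\<Sum>j\<in>UNIV. W i j * p j)" using st unfolding mat_vec_def by metis
  also have "\<dots> \<le> (\<Sum>j\<in>UNIV. W i j * yseq W t j)"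
    by (rule sum_mono) (simp add: Suc nn mult_left_mono)
  finally show ?case by simp
qed

lemma y_sum:
  fixes W :: "'n::finite \<Rightarrow> 'n \<Rightarrow> real"
  assumes cs: "\<forall>j. (\<Sum>i\<in>UNIV. W i j) = 1"
  shows "(\<Sum>i\<in>UNIV. yseq W t i) = real CARD('n)"
proof (induction t)
  case 0 thus ?case by simp
next
  case (Suc t)
  have "(\<Sum>i\<in>UNIV. yseq W (Suc t) i) = (\<Sum>i\<in>(UNIV::'n set). \<Sum>j\<in>UNIV. W i j * yseq W t j)" by simp
  also have "\<dots> = (\<Sum>j\<in>UNIV. (\<Sum>i\<in>UNIV. W i j) * yseq W t j)"
    by (subst sum.swap) (simp add: sum_distrib_right)
  also have "\<dots> = (\<Sum>j\<in>UNIV. yseq W t j)" using cs by simp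
  finally show ?case using Suc by simp
qed

lemma e_rec:
  fixes W :: "'n::finite \<Rightarrow> 'n \<Rightarrow> real"
  assumes cs: "\<forall>j. (\<Sum>i\<in>UNIV. W i j) = 1" and st: "mat_vec W p = p"
    and ps: "(\<Sum>i\<in>UNIV. p i) = 1"
  shows "(\<lambda>i. yseq W (Suc t) i - real CARD('n) * p i)
       = mat_vec (\<lambda>i j. W i j - p i) (\<lambda>i. yseq W t i - real CARD('n) * p i)"
proof
  fix i :: 'n
  let ?n = "real CARD('n)"
  have wp: "(\<Sum>j\<in>UNIV. W i j * p j) = p i" using st unfolding mat_vec_def by metis
  have "mat_vec (\<lambda>i j. W i j - p i) (\<lambda>i. yseq W t i - ?n * p i) i
     = (\<Sum>j\<in>UNIV. W i j * yseq W t j - ?n * (W i j * p j) - p i * yseq W t j + ?n * p i * p j)"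
    unfolding mat_vec_def by (rule sum.cong) (simp_all add: field_simps)
  also have "\<dots> = (\<Sum>j\<in>UNIV. W i j * yseq W t j) - ?n * (\<Sum>j\<in>UNIV. W i j * p j)
       - p i * (\<Sum>j\<in>UNIV. yseq W t j) + ?n * p i * (\<Sum>j\<in>UNIV. p j)"
  proof -
    have h1: "(\<Sum>j\<in>UNIV. ?n * (W i j * p j)) = ?n * (\<Sum>j\<in>UNIV. W i j * p j)"
      by (rule sum_distrib_left[symmetric])
    have h2: "(\<Sum>j\<in>UNIV. p i * yseq W t j) = p i * (\<Sum>j\<in>UNIV. yseq W t j)"
      by (rule sum_distrib_left[symmetric])
    have h3: "(\<Sum>j\<in>UNIV. ?n * p i * p j) = ?n * p i * (\<Sum>j\<in>UNIV. p j)"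
      by (rule sum_distrib_left[symmetric])
    show ?thesis by (simp only: sum.distrib sum_subtractf h1 h2 h3)
  qed
  also have "\<dots> = yseq W (Suc t) i - ?n * p i"
    using wp ps y_sum[OF cs, of t] by simp
  finally show "yseq W (Suc t) i - ?n * p i = mat_vec (\<lambda>i j. W i j - p i) (\<lambda>i. yseq W t i - ?n * p i) i" by simp
qed

lemma colsum:
  fixes E :: "('n::finite \<times> 'n) set"
  assumes "\<forall>i. (i, i) \<in> E"
  shows "(\<Sum>i\<in>UNIV. Wmat E i j) = 1"
proof -
  let ?S = "{i. (j, i) \<in> E}"
  have "j \<in> ?S" using assms by simp
  hence pos: "out_deg E j > 0" unfolding out_deg_def
    using card_gt_0_iff[of ?S] finite[of ?S] by blast
  have "(\<Sum>i\<in>UNIV. Wmat E i j) = (\<Sum>i\<in>UNIV. if i \<in> ?S then 1 / real (out_deg E j) else 0)"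
    unfolding Wmat_def by simp
  also have "\<dots> = real (card ?S) * (1 / real (out_deg E j))"
    by (simp add: sum.If_cases)
  also have "\<dots> = 1"
  proof -
    have "card ?S = out_deg E j" by (simp add: out_deg_def)
    thus ?thesis using pos by simp
  qed
  finally show ?thesis .
qed

theorem lemma5p1:
  fixes E :: "('n::finite \<times> 'n) set"
    and p :: "'n \<Rightarrow> real"
    and f :: "'n \<Rightarrow> real^'d \<Rightarrow> real"
    and gF :: "'n \<Rightarrow> real^'d \<Rightarrow> real^'d"
    and Lf :: "'n \<Rightarrow> real"
    and \<beta> \<alpha> :: real
    and wstar :: "real^'d"
    and w0 :: "'n \<Rightarrow> real^'d"
    and t :: nat
  assumes self_loops: "\<forall>i. (i, i) \<in> E"
    and strongly_connected: "\<forall>i j. (i, j) \<in> E\<^sup>*"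
    and stationary: "mat_vec (Wmat E) p = p"
    and p_pos: "\<forall>i. p i > 0"
    and p_sum: "(\<Sum>i\<in>UNIV. p i) = 1"
    and grad: "\<forall>i x. (f i has_derivative (\<lambda>h. gF i x \<bullet> h)) (at x)"
    and F1: "\<forall>i. (Lf i)-lipschitz_on UNIV (gF i)"
    and F2: "\<beta> > 0" "strongly_convex \<beta> (\<lambda>x. (1 / real CARD('n)) * (\<Sum>i\<in>UNIV. f i x))"
    and wstar_min: "\<forall>x. (1 / real CARD('n)) * (\<Sum>i\<in>UNIV. f i wstar)
                        \<le> (1 / real CARD('n)) * (\<Sum>i\<in>UNIV. f i x)"
    and alpha_pos: "\<alpha> > 0"
  shows "pi_block_norm p (\<lambda>i. zseq (Wmat E) gF \<alpha> w0 t i - wbar (Wmat E) gF \<alpha> w0 t)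
     \<le> delta (Wmat E) * pi_block_norm p (\<lambda>i. wseq (Wmat E) gF \<alpha> w0 t i
                 - kron (\<lambda>j. real CARD('n) * p j) (wbar (Wmat E) gF \<alpha> w0 t) i)
       + delta (Wmat E) * pi_norm p (\<lambda>i. 1 - real CARD('n) * p i) * sigmaW E p ^ t
         * (norm (wbar (Wmat E) gF \<alpha> w0 t - wstar) + norm wstar)"
proof -
  define W where "W = Wmat E"
  define n where "n = real CARD('n)"
  define y where "y = yseq W t"
  define w where "w = wseq W gF \<alpha> w0 t"
  define wb where "wb = wbar W gF \<alpha> w0 t"
  define D where "D = delta W"
  define \<sigma> where "\<sigma> = sigmaW E p"
  define e where "e = (\<lambda>s i. yseq W s i - n * p i)"
  have nn: "\<forall>i j. W i j \<ge> 0" unfolding W_def Wmat_def by simp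
  have cs: "\<forall>j. (\<Sum>i\<in>UNIV. W i j) = 1" unfolding W_def using colsum[OF self_loops] by simp
  have st: "mat_vec W p = p" using stationary unfolding W_def .
  have p1: "\<forall>i. p i \<le> 1"
  proof
    fix i
    have "p i \<le> (\<Sum>j\<in>UNIV. p j)" by (rule member_le_sum) (use p_pos in \<open>auto simp: less_imp_le\<close>)
    thus "p i \<le> 1" using p_sum by simp
  qed
  have ylow: "\<And>s i. yseq W s i \<ge> p i" using y_lower[OF nn st p1] by blast
  define M where "M = (\<Sum>i\<in>UNIV. 1 / p i)"
  have inv_le: "1 / yseq W s i \<le> M" for s i
  proof -
    have "1 / yseq W s i \<le> 1 / p i" using ylow[of i s] p_pos by (simp add: frac_le)
    also have "\<dots> \<le> M" unfolding M_def by (rule member_le_sum) (use p_pos in \<open>auto simp: less_imp_le\<close>)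
    finally show ?thesis .
  qed
  have bdd: "bdd_above (range (\<lambda>s. Max ((\<lambda>i. 1 / yseq W s i) ` UNIV)))"
    unfolding bdd_above_def using inv_le by (auto intro!: exI[of _ M])
  have yD: "1 / y i \<le> D" for i
  proof -
    have "1 / y i \<le> Max ((\<lambda>i. 1 / yseq W t i) ` UNIV)" unfolding y_def by (rule Max_ge) auto
    also have "\<dots> \<le> D" unfolding D_def delta_def by (rule cSUP_upper[OF _ bdd]) simp
    finally show ?thesis .
  qed
  have ypos: "y i > 0" for i using ylow[of i t] p_pos unfolding y_def by (meson less_le_trans)
  have D0: "D \<ge> 0"
  proof -
    have "0 < 1 / y undefined" using ypos[of undefined] by simp
    thus ?thesis using yD[of undefined] by linarith
  qed
  have erec: "e (Suc s) = mat_vec (\<lambda>i j. Wmat E i j - Winf p i j) (e s)" for s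
    unfolding e_def n_def Winf_def W_def[symmetric] using e_rec[OF cs st p_sum] by simp
  have sig0: "\<sigma> \<ge> 0" unfolding \<sigma>_def sigmaW_def using opnorm_bound(2)[OF p_pos] by blast
  have edec: "pi_norm p (e s) \<le> \<sigma> ^ s * pi_norm p (e 0)" for s
  proof (induction s)
    case 0 thus ?case by simp
  next
    case (Suc s)
    have "pi_norm p (e (Suc s)) \<le> \<sigma> * pi_norm p (e s)"
      unfolding erec \<sigma>_def sigmaW_def by (rule opnorm_bound(1)[OF p_pos])
    also have "\<dots> \<le> \<sigma> * (\<sigma> ^ s * pi_norm p (e 0))" using Suc sig0 by (simp add: mult_left_mono)
    finally show ?case by simp
  qed
  have e0: "e 0 = (\<lambda>i. 1 - real CARD('n) * p i)" unfolding e_def n_def by simp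
  define a where "a = (\<lambda>i. w i - kron (\<lambda>j. n * p j) wb i)"
  have pt: "norm ((1 / y i) *\<^sub>R w i - wb) / sqrt (p i)
      \<le> D * (norm (a i) / sqrt (p i)) + (D * norm wb) * (\<bar>e t i\<bar> / sqrt (p i))" for i
  proof -
    have eq: "(1 / y i) *\<^sub>R w i - wb = (1 / y i) *\<^sub>R (a i + (n * p i - y i) *\<^sub>R wb)"
      using ypos[of i] unfolding a_def kron_def by (simp add: algebra_simps)
    have "norm ((1 / y i) *\<^sub>R w i - wb) = (1 / y i) * norm (a i + (n * p i - y i) *\<^sub>R wb)"
      unfolding eq using ypos[of i] by simp
    also have "\<dots> \<le> D * (norm (a i) + \<bar>e t i\<bar> * norm wb)"
    proof (rule mult_mono)
      show "1 / y i \<le> D" by (rule yD)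
      have "norm (a i + (n * p i - y i) *\<^sub>R wb) \<le> norm (a i) + \<bar>n * p i - y i\<bar> * norm wb"
        by (metis norm_scaleR norm_triangle_ineq)
      also have "\<bar>n * p i - y i\<bar> = \<bar>e t i\<bar>" unfolding e_def y_def by simp
      finally show "norm (a i + (n * p i - y i) *\<^sub>R wb) \<le> norm (a i) + \<bar>e t i\<bar> * norm wb" .
    qed (use D0 in auto)
    finally have "norm ((1 / y i) *\<^sub>R w i - wb) \<le> D * (norm (a i) + \<bar>e t i\<bar> * norm wb)" .
    moreover have "sqrt (p i) > 0" using p_pos by simp
    ultimately show ?thesis by (simp add: divide_right_mono field_simps)
  qed
  have "pi_block_norm p (\<lambda>i. (1 / y i) *\<^sub>R w i - wb)
      = L2_set (\<lambda>i. norm ((1 / y i) *\<^sub>R w i - wb) / sqrt (p i)) UNIV"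
    by (rule pi_block_norm_L2[OF p_pos])
  also have "\<dots> \<le> L2_set (\<lambda>i. D * (norm (a i) / sqrt (p i)) + (D * norm wb) * (\<bar>e t i\<bar> / sqrt (p i))) UNIV"
    by (rule L2_set_mono) (use pt p_pos in \<open>auto simp: less_imp_le\<close>)
  also have "\<dots> \<le> L2_set (\<lambda>i. D * (norm (a i) / sqrt (p i))) UNIV
                 + L2_set (\<lambda>i. (D * norm wb) * (\<bar>e t i\<bar> / sqrt (p i))) UNIV"
    by (rule L2_set_triangle_ineq)
  also have "\<dots> = D * pi_block_norm p a + (D * norm wb) * pi_norm p (e t)"
    using D0 by (simp add: L2_set_right_distrib pi_block_norm_L2[OF p_pos] pi_norm_L2[OF p_pos])
  also have "\<dots> \<le> D * pi_block_norm p a + D * pi_norm p (e 0) * \<sigma> ^ t * (norm (wb - wstar) + norm wstar)"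
  proof -
    have "norm wb \<le> norm (wb - wstar) + norm wstar" by (metis norm_triangle_sub add.commute)
    have "(D * norm wb) * pi_norm p (e t) \<le> (D * (norm (wb - wstar) + norm wstar)) * (\<sigma> ^ t * pi_norm p (e 0))"
      by (rule mult_mono) (use edec D0 \<open>norm wb \<le> _\<close> pi_norm_nonneg[OF p_pos] in \<open>auto intro: mult_left_mono\<close>)
    thus ?thesis by (simp add: algebra_simps)
  qed
  finally show ?thesis
    unfolding e0 D_def \<sigma>_def a_def y_def w_def wb_def W_def n_def zseq_def by simp
qed

end
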